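(* Assume (A1), (A2), (A6) together with: (a) $A\perp\{Y(1,1),Y(1,0),M(0),M(1)\}\mid X$; (b) $\{M(0),M(1)\}\perp\{Y(1,0),Y(1,1)\}\mid X$; (c) there is $\epsilon>0$ with $P\{P(A=1,M=m\mid X)\ge\epsilon\}=1$ for $m=0,1$ and $P\{P(A=0\mid X)\ge\epsilon\}=1$. Then for (almost) every $x$, $$\psi(x) = P(Y(1,0)=0\mid Y(1,1)=1,X=x)\,P(M(0)=0\mid M(1)=1,X=x) = \Big[1-\frac{\mu_{10}(x)}{\mu_{11}(x)}\Big]\Big[1-\frac{\gamma_0(x)}{\gamma_1(x)}\Big].$$
   Context: Observed data $O=(X,A,M,Y)$ with covariates $X\in\mathbb{R}^d$, binary exposure $A$, binary mediator $M$, binary outcome $Y$. For $a,m\in\{0,1\}$, $Y(a,m)$ is the potential outcome under $A=a,M=m$, $M(a)$ the potential mediator, $Y(a):=Y(a,M(a))$, cross-world $Y(a,M(a'))$ by substitution, all on a common probability space with $O$. $\mu_{am}(x)=P(Y=1\mid A=a,M=m,X=x)$, $\gamma_a(x)=P(M=1\mid A=a,X=x)$. $\psi(x)=P(Y(1,M(0))=0,\,Y(0,M(0))=0\mid Y(1,M(1))=1,M(1)=1,X=x)$. (A1) consistency: $A=a,M=m\Rightarrow Y=Y(a,m)$ and $A=a\Rightarrow M=M(a)$. (A2) monotonicity: $Y(1,1)\ge Y(1,0)\ge Y(0,0)$, $Y(1,1)\ge Y(0,1)$, $M(1)\ge M(0)$. (A6) $P\{P(Y=1\mid A=1,M=1,X)\ge\epsilon\}=1$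 for some $\epsilon>0$. *)

theory Defs
  imports "HOL-Probability.Probability"
begin

text \<open>Conditional probability of the event E given the covariate X, as a version of
  E[1_E | sigma(X)] (a function of the sample point, measurable w.r.t. sigma(X)).\<close>
definition cpX :: "'a measure \<Rightarrow> ('a \<Rightarrow> 'x::topological_space) \<Rightarrow> ('a \<Rightarrow> bool) \<Rightarrow> 'a \<Rightarrow> real" where
  "cpX M X E = real_cond_exp M (vimage_algebra (space M) X borel) (indicator {w \<in> space M. E w})"

definition cpXB :: "'a measure \<Rightarrow> ('a \<Rightarrow> 'x::topological_space) \<Rightarrow> ('a \<Rightarrow> bool) \<Rightarrow> ('a \<Rightarrow> bool) \<Rightarrow> 'a \<Rightarrow> real" where
  "cpXB M X E B = (\<lambda>w. cpX M X (\<lambda>v. E v \<and> B v) w / cpX M X B w)"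

definition cond_indep_X :: "'a measure \<Rightarrow> ('a \<Rightarrow> 'x::topological_space) \<Rightarrow> ('a \<Rightarrow> 'u) \<Rightarrow> ('a \<Rightarrow> 'v) \<Rightarrow> bool" where
  "cond_indep_X M X U V \<longleftrightarrow>
     (\<forall>u v. AE w in M. cpX M X (\<lambda>z. U z = u \<and> V z = v) w
                        = cpX M X (\<lambda>z. U z = u) w * cpX M X (\<lambda>z. V z = v) w)"

end

theory Submission
  imports Defs
begin

lemma sfs:
  assumes "prob_space M" "X \<in> borel_measurable M"
  shows "sigma_finite_subalgebra M (vimage_algebra (space M) X borel)"
proof -
  interpret prob_space M by fact
  have "subalgebra M (vimage_algebra (space M) X borel)"
    unfolding subalgebra_def using sets_image_in_sets[OF refl assms(2)] by simp
  then have "finite_measure_subalgebra M (vimage_algebra (space M) X borel)"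
    by (simp add: finite_measure_axioms finite_measure_subalgebra_axioms.intro finite_measure_subalgebra_def)
  then show ?thesis by (rule finite_measure_subalgebra_is_sigma_finite)
qed

lemma pred_in: "U \<in> measurable M (count_space UNIV) \<Longrightarrow> Measurable.pred M (\<lambda>w. U w \<in> S)"
  unfolding pred_def
proof -
  assume "U \<in> measurable M (count_space UNIV)"
  then have "U -` S \<inter> space M \<in> sets M" by (simp add: measurable_sets)
  moreover have "{w \<in> space M. U w \<in> S} = U -` S \<inter> space M" by auto
  ultimately show "{w \<in> space M. U w \<in> S} \<in> sets M" by simp
qed


lemma pair_meas:
  fixes f :: "'a \<Rightarrow> 'b::countable" and g :: "'a \<Rightarrow> 'c::countable"
  assumes "f \<in> measurable M (count_space UNIV)" "g \<in> measurable M (count_space UNIV)"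
  shows "(\<lambda>z. (f z, g z)) \<in> measurable M (count_space UNIV)"
  unfolding measurable_count_space_eq2_countable
proof (intro conjI ballI)
  fix p :: "'b \<times> 'c"
  have "(\<lambda>z. (f z, g z)) -` {p} \<inter> space M = (f -` {fst p} \<inter> space M) \<inter> (g -` {snd p} \<inter> space M)"
    by (cases p) auto
  moreover have "f -` {fst p} \<inter> space M \<in> sets M" "g -` {snd p} \<inter> space M \<in> sets M"
    using assms by (simp_all add: measurable_sets)
  ultimately show "(\<lambda>z. (f z, g z)) -` {p} \<inter> space M \<in> sets M" by simp
qed simp

context
  fixes M :: "'a measure" and X :: "'a \<Rightarrow> 'x::topological_space"
  assumes P: "prob_space M" and XM: "X \<in> borel_measurable M"
begin

lemma cp_int: "Measurable.pred M E \<Longrightarrow> integrable M (indicator {w\<in>space M. E w} :: 'a \<Rightarrow> real)"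
proof -
  assume "Measurable.pred M E"
  then have "{w\<in>space M. E w} \<in> sets M" by (rule predE)
  then show ?thesis using P
    by (intro integrable_real_indicator) (auto simp: prob_space.emeasure_le_1 intro: le_less_trans[OF prob_space.emeasure_le_1])
qed

lemma cp_cong: "(\<And>w. w \<in> space M \<Longrightarrow> E w = G w) \<Longrightarrow> cpX M X E = cpX M X G"
  unfolding cpX_def by (metis (mono_tags, lifting) Collect_cong)

lemma cp_add:
  assumes "Measurable.pred M E" "Measurable.pred M G" "\<And>w. w \<in> space M \<Longrightarrow> \<not> (E w \<and> G w)"
  shows "AE w in M. cpX M X (\<lambda>z. E z \<or> G z) w = cpX M X E w + cpX M X G w"
proof -
  have eq: "(indicator {w\<in>space M. E w \<or> G w} :: 'a \<Rightarrow> real) = (\<lambda>x. indicator {w\<in>space M. E w} x + indicator {w\<in>space M. G w} x)"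
    using assms(3) by (force simp: indicator_def fun_eq_iff)
  show ?thesis unfolding cpX_def eq
    by (rule sigma_finite_subalgebra.real_cond_exp_add[OF sfs[OF P XM] cp_int cp_int]) (use assms in auto)
qed

lemma cp_nonneg: "Measurable.pred M E \<Longrightarrow> AE w in M. cpX M X E w \<ge> 0"
  unfolding cpX_def
  by (rule sigma_finite_subalgebra.real_cond_exp_pos[OF sfs[OF P XM]]) (auto dest: cp_int)

lemma cp_false: "AE w in M. cpX M X (\<lambda>_. False) w = 0"
proof -
  have "AE x in M. real_cond_exp M (vimage_algebra (space M) X borel) (\<lambda>x. 0 * indicator {} x) x = 0 * real_cond_exp M (vimage_algebra (space M) X borel) (indicator {}) x"
    by (rule sigma_finite_subalgebra.real_cond_exp_cmult[OF sfs[OF P XM]]) simp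
  moreover have "(indicator {w\<in>space M. False} :: 'a \<Rightarrow> real) = (\<lambda>x. 0 * indicator {} x)" by (simp add: fun_eq_iff)
  ultimately show ?thesis unfolding cpX_def by simp
qed

lemma cp_zero: "(\<And>w. w \<in> space M \<Longrightarrow> \<not> E w) \<Longrightarrow> AE w in M. cpX M X E w = 0"
proof -
  assume "\<And>w. w \<in> space M \<Longrightarrow> \<not> E w"
  then have "cpX M X E = cpX M X (\<lambda>_. False)" by (intro cp_cong) auto
  then show ?thesis using cp_false by simp
qed

lemma ci_pt_set:
  fixes U :: "'a \<Rightarrow> 'u" and V :: "'a \<Rightarrow> 'v::finite"
  assumes ci: "cond_indep_X M X U V" and U[measurable]: "U \<in> measurable M (count_space UNIV)"
    and V[measurable]: "V \<in> measurable M (count_space UNIV)"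
  shows "AE w in M. cpX M X (\<lambda>z. U z = u \<and> V z \<in> T) w = cpX M X (\<lambda>z. U z = u) w * cpX M X (\<lambda>z. V z \<in> T) w"
proof -
  have "finite T" by simp
  then show ?thesis
  proof (induct T rule: finite_induct)
    case empty
    have "AE w in M. cpX M X (\<lambda>z. U z = u \<and> V z \<in> {}) w = 0" by (rule cp_zero) simp
    moreover have "AE w in M. cpX M X (\<lambda>z. V z \<in> {}) w = 0" by (rule cp_zero) simp
    ultimately show ?case by eventually_elim simp
  next
    case (insert v T)
    have c1: "cpX M X (\<lambda>z. U z = u \<and> V z \<in> insert v T) = cpX M X (\<lambda>z. (U z = u \<and> V z = v) \<or> (U z = u \<and> V z \<in> T))"
      by (rule cp_cong) auto
    have c2: "cpX M X (\<lambda>z. V z \<in> insert v T) = cpX M X (\<lambda>z. V z = v \<or> V z \<in> T)"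
      by (rule cp_cong) auto
    have a1: "AE w in M. cpX M X (\<lambda>z. (U z = u \<and> V z = v) \<or> (U z = u \<and> V z \<in> T)) w
        = cpX M X (\<lambda>z. U z = u \<and> V z = v) w + cpX M X (\<lambda>z. U z = u \<and> V z \<in> T) w"
      by (rule cp_add) (use insert in auto)
    have a2: "AE w in M. cpX M X (\<lambda>z. V z = v \<or> V z \<in> T) w = cpX M X (\<lambda>z. V z = v) w + cpX M X (\<lambda>z. V z \<in> T) w"
      by (rule cp_add) (use insert in auto)
    have ci1: "AE w in M. cpX M X (\<lambda>z. U z = u \<and> V z = v) w = cpX M X (\<lambda>z. U z = u) w * cpX M X (\<lambda>z. V z = v) w"
      using ci unfolding cond_indep_X_def by blast
    from a1 a2 ci1 insert(3) show ?case unfolding c1 c2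
      by eventually_elim (simp add: distrib_left)
  qed
qed

lemma ci_sets:
  fixes U :: "'a \<Rightarrow> 'u::finite" and V :: "'a \<Rightarrow> 'v::finite"
  assumes ci: "cond_indep_X M X U V" and U[measurable]: "U \<in> measurable M (count_space UNIV)"
    and V[measurable]: "V \<in> measurable M (count_space UNIV)"
  shows "AE w in M. cpX M X (\<lambda>z. U z \<in> S \<and> V z \<in> T) w = cpX M X (\<lambda>z. U z \<in> S) w * cpX M X (\<lambda>z. V z \<in> T) w"
proof -
  have "finite S" by simp
  then show ?thesis
  proof (induct S rule: finite_induct)
    case empty
    have "AE w in M. cpX M X (\<lambda>z. U z \<in> {} \<and> V z \<in> T) w = 0" by (rule cp_zero) simp
    moreover have "AE w in M. cpX M X (\<lambda>z. U z \<in> {}) w = 0" by (rule cp_zero) simp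
    ultimately show ?case by eventually_elim simp
  next
    case (insert u S)
    have c1: "cpX M X (\<lambda>z. U z \<in> insert u S \<and> V z \<in> T) = cpX M X (\<lambda>z. (U z = u \<and> V z \<in> T) \<or> (U z \<in> S \<and> V z \<in> T))"
      by (rule cp_cong) auto
    have c2: "cpX M X (\<lambda>z. U z \<in> insert u S) = cpX M X (\<lambda>z. U z = u \<or> U z \<in> S)"
      by (rule cp_cong) auto
    have a1: "AE w in M. cpX M X (\<lambda>z. (U z = u \<and> V z \<in> T) \<or> (U z \<in> S \<and> V z \<in> T)) w
        = cpX M X (\<lambda>z. U z = u \<and> V z \<in> T) w + cpX M X (\<lambda>z. U z \<in> S \<and> V z \<in> T) w"
      by (rule cp_add) (use insert in auto)
    have a2: "AE w in M. cpX M X (\<lambda>z. U z = u \<or> U z \<in> S) w = cpX M X (\<lambda>z. U z = u) w + cpX M X (\<lambda>z. U z \<in> S) w"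
      by (rule cp_add) (use insert in auto)
    have ci1: "AE w in M. cpX M X (\<lambda>z. U z = u \<and> V z \<in> T) w = cpX M X (\<lambda>z. U z = u) w * cpX M X (\<lambda>z. V z \<in> T) w"
      by (rule ci_pt_set[OF ci U V])
    from a1 a2 ci1 insert(3) show ?case unfolding c1 c2
      by eventually_elim (simp add: distrib_right)
  qed
qed

end

lemma alg:
  fixes a m1 nm1 na y11 y10 q1 q2 m0 :: real
  assumes "a*m1 > 0" "a*nm1 > 0" "na > 0" "y11 > 0" "y11 = y10+q1" "m1 = m0+q2"
  shows "q2*q1/(m1*y11) = q1/y11*(q2/m1) \<and> q1/y11*(q2/m1) = (1 - a*(nm1*y10)/(a*nm1) / (a*(m1*y11)/(a*m1))) * (1 - na*m0/na / (a*m1/a))"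
proof -
  have a: "a \<noteq> 0" "m1 \<noteq> 0" "nm1 \<noteq> 0" using assms(1,2) by auto
  have e1: "a*(nm1*y10)/(a*nm1) = y10" using a by (simp add: field_simps)
  have e2: "a*(m1*y11)/(a*m1) = y11" using a by (simp add: field_simps)
  have e3: "na*m0/na = m0" "a*m1/a = m1" using a assms(3) by auto
  show ?thesis unfolding e1 e2 e3 using a assms(4,5,6) by (simp add: field_simps)
qed

theorem mainTheorem4:
  fixes M :: "'a measure"
    and X :: "'a \<Rightarrow> real ^ 'd"
    and A Mv Y :: "'a \<Rightarrow> bool"
    and Yp :: "bool \<Rightarrow> bool \<Rightarrow> 'a \<Rightarrow> bool"
    and Mp :: "bool \<Rightarrow> 'a \<Rightarrow> bool"
  assumes prob: "prob_space M"
    and X_meas: "X \<in> borel_measurable M"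
    and A_meas: "A \<in> measurable M (count_space UNIV)"
    and Mv_meas: "Mv \<in> measurable M (count_space UNIV)"
    and Y_meas: "Y \<in> measurable M (count_space UNIV)"
    and Yp_meas: "\<And>a m. Yp a m \<in> measurable M (count_space UNIV)"
    and Mp_meas: "\<And>a. Mp a \<in> measurable M (count_space UNIV)"
    \<comment> \<open>(A1) consistency\<close>
    and A1_Y: "\<And>w a m. w \<in> space M \<Longrightarrow> A w = a \<Longrightarrow> Mv w = m \<Longrightarrow> Y w = Yp a m w"
    and A1_M: "\<And>w a. w \<in> space M \<Longrightarrow> A w = a \<Longrightarrow> Mv w = Mp a w"
    \<comment> \<open>(A2) monotonicity\<close>
    and A2: "\<And>w. w \<in> space M \<Longrightarrow>
               (Yp True False w \<longrightarrow> Yp True True w) \<and> (Yp False False w \<longrightarrow> Yp True False w)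
             \<and> (Yp False True w \<longrightarrow> Yp True True w) \<and> (Mp False w \<longrightarrow> Mp True w)"
    \<comment> \<open>(A6)\<close>
    and A6: "\<exists>\<epsilon>>0. AE w in M. cpXB M X Y (\<lambda>z. A z \<and> Mv z) w \<ge> \<epsilon>"
    \<comment> \<open>(a)\<close>
    and ci_a: "cond_indep_X M X A (\<lambda>z. (Yp True True z, Yp True False z, Mp False z, Mp True z))"
    \<comment> \<open>(b)\<close>
    and ci_b: "cond_indep_X M X (\<lambda>z. (Mp False z, Mp True z)) (\<lambda>z. (Yp True False z, Yp True True z))"
    \<comment> \<open>(c) positivity\<close>
    and pos: "\<exists>\<epsilon>>0. (\<forall>m. AE w in M. cpX M X (\<lambda>z. A z \<and> Mv z = m) w \<ge> \<epsilon>)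
                    \<and> (AE w in M. cpX M X (\<lambda>z. \<not> A z) w \<ge> \<epsilon>)"
  shows "AE w in M.
           cpXB M X (\<lambda>z. \<not> Yp True (Mp False z) z \<and> \<not> Yp False (Mp False z) z)
                    (\<lambda>z. Yp True (Mp True z) z \<and> Mp True z) w
             = cpXB M X (\<lambda>z. \<not> Yp True False z) (\<lambda>z. Yp True True z) w
               * cpXB M X (\<lambda>z. \<not> Mp False z) (\<lambda>z. Mp True z) w
         \<and> cpXB M X (\<lambda>z. \<not> Yp True False z) (\<lambda>z. Yp True True z) w
               * cpXB M X (\<lambda>z. \<not> Mp False z) (\<lambda>z. Mp True z) w
             = (1 - cpXB M X Y (\<lambda>z. A z \<and> \<not> Mv z) w / cpXB M X Y (\<lambda>z. A z \<and> Mv z) w)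
               * (1 - cpXB M X Mv (\<lambda>z. \<not> A z) w / cpXB M X Mv (\<lambda>z. A z) w)"
proof -
  note cong = cp_cong[OF prob X_meas]
  note add = cp_add[OF prob X_meas]
  note cis = ci_sets[OF prob X_meas]
  have [measurable]: "Measurable.pred M A" "Measurable.pred M Mv" "Measurable.pred M Y"
    "\<And>a m. Measurable.pred M (Yp a m)" "\<And>a. Measurable.pred M (Mp a)"
    using A_meas Mv_meas Y_meas Yp_meas Mp_meas by auto
  have ev1: "\<And>w. w \<in> space M \<Longrightarrow> Mv w = (if A w then Mp True w else Mp False w)"
    using A1_M by auto
  have ev2: "\<And>w. w \<in> space M \<Longrightarrow> Y w = (if A w then (if Mp True w then Yp True True w else Yp True False w)
      else (if Mp False w then Yp False True w else Yp False False w))"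
    using A1_Y ev1 by (metis (full_types))
  define T1 where "T1 = (\<lambda>z. (Yp True True z, Yp True False z, Mp False z, Mp True z))"
  define W1 where "W1 = (\<lambda>z. (Mp False z, Mp True z))"
  define W2 where "W2 = (\<lambda>z. (Yp True False z, Yp True True z))"
  have T1m: "T1 \<in> measurable M (count_space UNIV)" unfolding T1_def
    by (intro pair_meas Yp_meas Mp_meas)
  have W1m: "W1 \<in> measurable M (count_space UNIV)" unfolding W1_def
    by (intro pair_meas Yp_meas Mp_meas)
  have W2m: "W2 \<in> measurable M (count_space UNIV)" unfolding W2_def
    by (intro pair_meas Yp_meas Mp_meas)
  have cia: "cond_indep_X M X A T1" using ci_a unfolding T1_def .
  have cib: "cond_indep_X M X W1 W2" using ci_b unfolding W1_def W2_def .
  note ca = cis[OF cia A_meas T1m]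
  note cb = cis[OF cib W1m W2m]
  let ?P = "cpX M X"
  let ?q1 = "?P (\<lambda>z. \<not> Yp True False z \<and> Yp True True z)"
  let ?q2 = "?P (\<lambda>z. \<not> Mp False z \<and> Mp True z)"
  let ?y11 = "?P (Yp True True)"
  let ?y10 = "?P (Yp True False)"
  let ?m1 = "?P (Mp True)"
  let ?m0 = "?P (Mp False)"
  let ?nm1 = "?P (\<lambda>z. \<not> Mp True z)"
  let ?a = "?P A"
  let ?na = "?P (\<lambda>z. \<not> A z)"
  have "?P (\<lambda>v. (\<not> Yp True (Mp False v) v \<and> \<not> Yp False (Mp False v) v) \<and> (Yp True (Mp True v) v \<and> Mp True v))
      = ?P (\<lambda>z. W1 z \<in> {(False,True)} \<and> W2 z \<in> {(False,True)})"
  proof (rule cong)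
    fix w assume w: "w \<in> space M"
    show "((\<not> Yp True (Mp False w) w \<and> \<not> Yp False (Mp False w) w) \<and> (Yp True (Mp True w) w \<and> Mp True w))
      = (W1 w \<in> {(False,True)} \<and> W2 w \<in> {(False,True)})"
      using A2[OF w] unfolding W1_def W2_def by (cases "Mp False w"; cases "Mp True w") auto
  qed
  moreover have "?P (\<lambda>z. W1 z \<in> {(False,True)}) = ?q2" by (rule cong) (auto simp: W1_def)
  moreover have "?P (\<lambda>z. W2 z \<in> {(False,True)}) = ?q1" by (rule cong) (auto simp: W2_def)
  ultimately have f1: "AE w in M. ?P (\<lambda>v. (\<not> Yp True (Mp False v) v \<and> \<not> Yp False (Mp False v) v) \<and> (Yp True (Mp True v) v \<and> Mp True v)) w = ?q2 w * ?q1 w"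
    using cb[of "{(False,True)}" "{(False,True)}"] by simp
  have "?P (\<lambda>v. Yp True (Mp True v) v \<and> Mp True v) = ?P (\<lambda>z. W1 z \<in> {p. snd p} \<and> W2 z \<in> {p. snd p})"
    by (rule cong) (auto simp: W1_def W2_def)
  moreover have "?P (\<lambda>z. W1 z \<in> {p. snd p}) = ?m1" by (rule cong) (auto simp: W1_def)
  moreover have "?P (\<lambda>z. W2 z \<in> {p. snd p}) = ?y11" by (rule cong) (auto simp: W2_def)
  ultimately have f2: "AE w in M. ?P (\<lambda>v. Yp True (Mp True v) v \<and> Mp True v) w = ?m1 w * ?y11 w"
    using cb[of "{p. snd p}" "{p. snd p}"] by simp
  have f2': "AE w in M. ?P (\<lambda>v. Yp True True v \<and> Mp True v) w = ?m1 w * ?y11 w"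
  proof -
    have "?P (\<lambda>v. Yp True True v \<and> Mp True v) = ?P (\<lambda>v. Yp True (Mp True v) v \<and> Mp True v)"
      by (rule cong) auto
    then show ?thesis using f2 by simp
  qed
  have f2'': "AE w in M. ?P (\<lambda>v. Yp True False v \<and> \<not> Mp True v) w = ?nm1 w * ?y10 w"
  proof -
    have "?P (\<lambda>v. Yp True False v \<and> \<not> Mp True v) = ?P (\<lambda>z. W1 z \<in> {p. \<not> snd p} \<and> W2 z \<in> {p. fst p})"
      by (rule cong) (auto simp: W1_def W2_def)
    moreover have "?P (\<lambda>z. W1 z \<in> {p. \<not> snd p}) = ?nm1" by (rule cong) (auto simp: W1_def)
    moreover have "?P (\<lambda>z. W2 z \<in> {p. fst p}) = ?y10" by (rule cong) (auto simp: W2_def)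
    ultimately show ?thesis using cb[of "{p. \<not> snd p}" "{p. fst p}"] by simp
  qed
  have Aeq: "?P (\<lambda>z. A z \<in> {True}) = ?a" by (rule cong) auto
  have nAeq: "?P (\<lambda>z. A z \<in> {False}) = ?na" by (rule cong) auto
  have f3n: "AE w in M. ?P (\<lambda>v. Y v \<and> (A v \<and> \<not> Mv v)) w = ?a w * (?nm1 w * ?y10 w)"
  proof -
    have "?P (\<lambda>v. Y v \<and> (A v \<and> \<not> Mv v)) = ?P (\<lambda>z. A z \<in> {True} \<and> T1 z \<in> {t. fst (snd t) \<and> \<not> snd (snd (snd t))})"
      by (rule cong) (auto simp: T1_def ev1 ev2)
    moreover have "?P (\<lambda>z. T1 z \<in> {t. fst (snd t) \<and> \<not> snd (snd (snd t))}) = ?P (\<lambda>v. Yp True False v \<and> \<not> Mp True v)"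
      by (rule cong) (auto simp: T1_def)
    ultimately show ?thesis using ca[of "{True}" "{t. fst (snd t) \<and> \<not> snd (snd (snd t))}"] f2'' Aeq
      by (auto elim: AE_mp)
  qed
  have f3d: "AE w in M. ?P (\<lambda>v. A v \<and> \<not> Mv v) w = ?a w * ?nm1 w"
  proof -
    have "?P (\<lambda>v. A v \<and> \<not> Mv v) = ?P (\<lambda>z. A z \<in> {True} \<and> T1 z \<in> {t. \<not> snd (snd (snd t))})"
      by (rule cong) (auto simp: T1_def ev1)
    moreover have "?P (\<lambda>z. T1 z \<in> {t. \<not> snd (snd (snd t))}) = ?nm1"
      by (rule cong) (auto simp: T1_def)
    ultimately show ?thesis using ca[of "{True}" "{t. \<not> snd (snd (snd t))}"] Aeq by simp
  qed
  have f4n: "AE w in M. ?P (\<lambda>v. Y v \<and> (A v \<and> Mv v)) w = ?a w * (?m1 w * ?y11 w)"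
  proof -
    have "?P (\<lambda>v. Y v \<and> (A v \<and> Mv v)) = ?P (\<lambda>z. A z \<in> {True} \<and> T1 z \<in> {t. fst t \<and> snd (snd (snd t))})"
      by (rule cong) (auto simp: T1_def ev1 ev2)
    moreover have "?P (\<lambda>z. T1 z \<in> {t. fst t \<and> snd (snd (snd t))}) = ?P (\<lambda>v. Yp True True v \<and> Mp True v)"
      by (rule cong) (auto simp: T1_def)
    ultimately show ?thesis using ca[of "{True}" "{t. fst t \<and> snd (snd (snd t))}"] f2' Aeq
      by (auto elim: AE_mp)
  qed
  have f4d: "AE w in M. ?P (\<lambda>v. A v \<and> Mv v) w = ?a w * ?m1 w"
  proof -
    have "?P (\<lambda>v. A v \<and> Mv v) = ?P (\<lambda>z. A z \<in> {True} \<and> T1 z \<in> {t. snd (snd (snd t))})"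
      by (rule cong) (auto simp: T1_def ev1)
    moreover have "?P (\<lambda>z. T1 z \<in> {t. snd (snd (snd t))}) = ?m1"
      by (rule cong) (auto simp: T1_def)
    ultimately show ?thesis using ca[of "{True}" "{t. snd (snd (snd t))}"] Aeq by simp
  qed
  have f6n: "AE w in M. ?P (\<lambda>v. Mv v \<and> A v) w = ?a w * ?m1 w"
  proof -
    have "?P (\<lambda>v. Mv v \<and> A v) = ?P (\<lambda>v. A v \<and> Mv v)" by (rule cong) auto
    then show ?thesis using f4d by simp
  qed
  have f5n: "AE w in M. ?P (\<lambda>v. Mv v \<and> \<not> A v) w = ?na w * ?m0 w"
  proof -
    have "?P (\<lambda>v. Mv v \<and> \<not> A v) = ?P (\<lambda>z. A z \<in> {False} \<and> T1 z \<in> {t. fst (snd (snd t))})"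
      by (rule cong) (auto simp: T1_def ev1)
    moreover have "?P (\<lambda>z. T1 z \<in> {t. fst (snd (snd t))}) = ?m0"
      by (rule cong) (auto simp: T1_def)
    ultimately show ?thesis using ca[of "{False}" "{t. fst (snd (snd t))}"] nAeq by simp
  qed
  have f7a: "AE w in M. ?y11 w = ?y10 w + ?q1 w"
  proof -
    have "?y11 = ?P (\<lambda>z. Yp True False z \<or> (\<not> Yp True False z \<and> Yp True True z))"
      by (rule cong) (use A2 in auto)
    moreover have "AE w in M. ?P (\<lambda>z. Yp True False z \<or> (\<not> Yp True False z \<and> Yp True True z)) w = ?y10 w + ?q1 w"
      by (rule add) auto
    ultimately show ?thesis by simp
  qed
  have f7b: "AE w in M. ?m1 w = ?m0 w + ?q2 w"
  proof -
    have "?m1 = ?P (\<lambda>z. Mp False z \<or> (\<not> Mp False z \<and> Mp True z))"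
      by (rule cong) (use A2 in auto)
    moreover have "AE w in M. ?P (\<lambda>z. Mp False z \<or> (\<not> Mp False z \<and> Mp True z)) w = ?m0 w + ?q2 w"
      by (rule add) auto
    ultimately show ?thesis by simp
  qed
  obtain e1 where e1: "e1 > 0" "AE w in M. cpXB M X Y (\<lambda>z. A z \<and> Mv z) w \<ge> e1" using A6 by blast
  obtain e2 where e2: "e2 > 0" "\<And>m. AE w in M. ?P (\<lambda>z. A z \<and> Mv z = m) w \<ge> e2"
    "AE w in M. ?na w \<ge> e2" using pos by blast
  have pT: "?P (\<lambda>z. A z \<and> Mv z = True) = ?P (\<lambda>v. A v \<and> Mv v)" by (rule cong) auto
  have pF: "?P (\<lambda>z. A z \<and> Mv z = False) = ?P (\<lambda>v. A v \<and> \<not> Mv v)" by (rule cong) auto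
  have p1: "AE w in M. ?P (\<lambda>v. A v \<and> Mv v) w \<ge> e2" using e2(2)[of True] unfolding pT .
  have p2: "AE w in M. ?P (\<lambda>v. A v \<and> \<not> Mv v) w \<ge> e2" using e2(2)[of False] unfolding pF .
  from f1 f2 f3n f3d f4n f4d f5n f6n f7a f7b e1(2) e2(3) p1 p2
  show ?thesis
    unfolding cpXB_def
  proof eventually_elim
    case (elim w)
    have y: "?y11 w \<ge> e1"
    proof -
      have "?a w * ?m1 w > 0" using elim e2(1) by linarith
      then have "?a w * (?m1 w * ?y11 w) / (?a w * ?m1 w) = ?y11 w"
        by (metis mult.left_commute mult.assoc nonzero_mult_div_cancel_left less_irrefl)
      then show ?thesis using elim by (simp add: cpXB_def)
    qed
    have "?a w * ?m1 w > 0" "?a w * ?nm1 w > 0" "?na w > 0" "?y11 w > 0"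
      using elim e2(1) e1(1) y by linarith+
    note alg[OF this elim(9) elim(10)]
    then show ?case using elim by simp
  qed
qed

end
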